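(* Let $F(\bar f,g)=0$ be any curve of bidegree $(3,2)$ in $(\bar f,g)\in\mathbb{P}^1\times\mathbb{P}^1$ passing through the 10 points $(\bar f(u),g(u))$, $u=u_1,\dots,u_8,\ z/q,\ h_1/(qz)$. Substitute $g=g(\bar f,\bar g)$, the inverse of the birational map defined by relation (B). Then the resulting curve in $(\bar f,\bar g)$ (i.e. the numerator of $F(\bar f,g(\bar f,\bar g))$ with the factor $\prod_{i=1}^8\{\bar f-\bar f(u_i)\}$ removed) is again of bidegree $(3,2)$ and passes through the 10 points $(\bar f,\bar g)=(\bar f(u),\bar g(u))$ with $u=u_1,\dots,u_8,\ z,\ h_1/z$.
   Context: Let $h_1,h_2,u_1,\dots,u_8$ be generic nonzero complex parameters, $z$ generic, and $q=h_1^2h_2^2/(u_1\cdots u_8)$. Put $g(u)=u+h_2/u$, $\bar f(u)=u+\frac{h_1}{qu}$, $\bar g(u)=u+\frac{h_2q}{u}$. Let $U(z)=\prod_{i=1}^8(z-u_i)=\sum_{i=0}^8(-1)^i m_{8-i}z^i$ (so $m_0=1$, $m_8=h_1^2h_2^2/q$). For a parameter $h$ define polynomials in a variable $x$: $P_n(h,x)=m_0x^4-m_1x^3+(m_2-3hm_0-h^{-3}m_8)x^2+(2hm_1-m_3+h^{-2}m_7)x+(h^2m_0-hm_2+m_4-h^{-1}m_6+h^{-2}m_8)$, $P_d(h,x)=m_8x^4-hm_7x^3+(h^2m_6-3hm_8-h^5m_0)x^2+(2h^2m_7-h^3m_5+h^5m_1)x+(h^6m_0-h^5m_2+h^4m_4-h^3m_6+h^2m_8)$.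 Relation (B), which is linear in each of $g$ and $\bar g$ and defines a birational correspondence $g\leftrightarrow\bar g$ depending on $\bar f$: $$\frac{(\bar f-\bar g)(\bar f-g)-(\frac{h_1}{q}-h_2q)(\frac{h_1}{q}-h_2)\frac q{h_1}}{(\frac{\bar fq}{h_1}-\frac{\bar g}{h_2q})(\frac{\bar fq}{h_1}-\frac g{h_2})-(\frac q{h_1}-\frac1{h_2q})(\frac q{h_1}-\frac1{h_2})\frac{h_1}q}=\frac{h_1^4h_2^2}{q^3}\frac{P_n(\frac{h_1}q,\bar f)}{P_d(\frac{h_1}q,\bar f)}.$$ *)

theory Defs
  imports Complex_Main "HOL-Computational_Algebra.Polynomial"
begin

section \<open>Genericity: complement of the zero set of a nonzero polynomial function\<close>

inductive_set polyfun :: "((nat \<Rightarrow> complex) \<Rightarrow> complex) set" where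
  pf_const: "(\<lambda>x. c) \<in> polyfun"
| pf_var: "(\<lambda>x. x i) \<in> polyfun"
| pf_add: "p \<in> polyfun \<Longrightarrow> r \<in> polyfun \<Longrightarrow> (\<lambda>x. p x + r x) \<in> polyfun"
| pf_mul: "p \<in> polyfun \<Longrightarrow> r \<in> polyfun \<Longrightarrow> (\<lambda>x. p x * r x) \<in> polyfun"

definition params :: "complex \<Rightarrow> complex \<Rightarrow> (nat \<Rightarrow> complex) \<Rightarrow> complex \<Rightarrow> nat \<Rightarrow> complex" where
  "params h1 h2 u z = (\<lambda>i. if i = 0 then h1 else if i = 9 then h2 else if i = 10 then z else u i)"

definition qq :: "complex \<Rightarrow> complex \<Rightarrow> (nat \<Rightarrow> complex) \<Rightarrow> complex" where
  "qq h1 h2 u = h1^2 * h2^2 / (\<Prod>i\<in>{1..8}. u i)"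

definition Upoly :: "(nat \<Rightarrow> complex) \<Rightarrow> complex poly" where
  "Upoly u = (\<Prod>i\<in>{1..8}. [:- u i, 1:])"

text \<open>U(z) = sum_{i=0}^8 (-1)^i m_{8-i} z^i, i.e. m_k = (-1)^(8-k) [z^(8-k)] U(z).\<close>
definition mm :: "(nat \<Rightarrow> complex) \<Rightarrow> nat \<Rightarrow> complex" where
  "mm u k = (-1)^(8-k) * coeff (Upoly u) (8-k)"

definition Pn :: "(nat \<Rightarrow> complex) \<Rightarrow> complex \<Rightarrow> complex \<Rightarrow> complex" where
  "Pn u h x = mm u 0 * x^4 - mm u 1 * x^3
     + (mm u 2 - 3*h*mm u 0 - mm u 8 / h^3) * x^2
     + (2*h*mm u 1 - mm u 3 + mm u 7 / h^2) * x
     + (h^2*mm u 0 - h*mm u 2 + mm u 4 - mm u 6 / h + mm u 8 / h^2)"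

definition Pd :: "(nat \<Rightarrow> complex) \<Rightarrow> complex \<Rightarrow> complex \<Rightarrow> complex" where
  "Pd u h x = mm u 8 * x^4 - h*mm u 7 * x^3
     + (h^2*mm u 6 - 3*h*mm u 8 - h^5*mm u 0) * x^2
     + (2*h^2*mm u 7 - h^3*mm u 5 + h^5*mm u 1) * x
     + (h^6*mm u 0 - h^5*mm u 2 + h^4*mm u 4 - h^3*mm u 6 + h^2*mm u 8)"

definition gfun :: "complex \<Rightarrow> complex \<Rightarrow> complex" where
  "gfun h2 v = v + h2 / v"

definition fbar :: "complex \<Rightarrow> complex \<Rightarrow> complex \<Rightarrow> complex" where
  "fbar h1 q v = v + h1 / (q * v)"

definition gbar :: "complex \<Rightarrow> complex \<Rightarrow> complex \<Rightarrow> complex" where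
  "gbar h2 q v = v + h2 * q / v"

text \<open>Relation (B), literally, between fb = \<open>\<bar>f\<close>, g and gb = \<open>\<bar>g\<close>.\<close>
definition relB :: "complex \<Rightarrow> complex \<Rightarrow> (nat \<Rightarrow> complex) \<Rightarrow> complex \<Rightarrow> complex \<Rightarrow> complex \<Rightarrow> bool" where
  "relB h1 h2 u fb g gb \<longleftrightarrow>
     (let q = qq h1 h2 u in
       ((fb - gb) * (fb - g) - (h1/q - h2*q) * (h1/q - h2) * (q/h1))
       / ((fb*q/h1 - gb/(h2*q)) * (fb*q/h1 - g/h2) - (q/h1 - 1/(h2*q)) * (q/h1 - 1/h2) * (h1/q))
       = (h1^4 * h2^2 / q^3) * (Pn u (h1/q) fb / Pd u (h1/q) fb))"

definition ginv_dom :: "complex \<Rightarrow> complex \<Rightarrow> (nat \<Rightarrow> complex) \<Rightarrow> complex \<Rightarrow> complex \<Rightarrow> bool" where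
  "ginv_dom h1 h2 u fb gb \<longleftrightarrow>
     Pn u (h1 / qq h1 h2 u) fb \<noteq> 0 \<and> Pd u (h1 / qq h1 h2 u) fb \<noteq> 0 \<and> (\<exists>!g. relB h1 h2 u fb g gb)"

definition ginv :: "complex \<Rightarrow> complex \<Rightarrow> (nat \<Rightarrow> complex) \<Rightarrow> complex \<Rightarrow> complex \<Rightarrow> complex" where
  "ginv h1 h2 u fb gb = (THE g. relB h1 h2 u fb g gb)"

definition bieval :: "(nat \<Rightarrow> nat \<Rightarrow> complex) \<Rightarrow> complex \<Rightarrow> complex \<Rightarrow> complex" where
  "bieval a x y = (\<Sum>i\<le>3. \<Sum>j\<le>2. a i j * x^i * y^j)"

text \<open>Bihomogenised substitution y = P/Q: the numerator of F(x, P/Q).\<close>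
definition bihom :: "(nat \<Rightarrow> nat \<Rightarrow> complex) \<Rightarrow> complex \<Rightarrow> complex \<Rightarrow> complex \<Rightarrow> complex" where
  "bihom a x P Q = (\<Sum>i\<le>3. \<Sum>j\<le>2. a i j * x^i * P^j * Q^(2-j))"

definition nonzero32 :: "(nat \<Rightarrow> nat \<Rightarrow> complex) \<Rightarrow> bool" where
  "nonzero32 a \<longleftrightarrow> (\<exists>i\<le>3. \<exists>j\<le>2. a i j \<noteq> 0)"

end

theory Submission
  imports Defs
begin

definition PnM :: "(nat \<Rightarrow> complex) \<Rightarrow> complex \<Rightarrow> complex \<Rightarrow> complex" where
  "PnM m h x = m 0 * x^4 - m 1 * x^3
     + (m 2 - 3*h*m 0 - m 8 / h^3) * x^2
     + (2*h*m 1 - m 3 + m 7 / h^2) * x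
     + (h^2*m 0 - h*m 2 + m 4 - m 6 / h + m 8 / h^2)"

definition PdM :: "(nat \<Rightarrow> complex) \<Rightarrow> complex \<Rightarrow> complex \<Rightarrow> complex" where
  "PdM m h x = m 8 * x^4 - h*m 7 * x^3
     + (h^2*m 6 - 3*h*m 8 - h^5*m 0) * x^2
     + (2*h^2*m 7 - h^3*m 5 + h^5*m 1) * x
     + (h^6*m 0 - h^5*m 2 + h^4*m 4 - h^3*m 6 + h^2*m 8)"

definition UM :: "(nat \<Rightarrow> complex) \<Rightarrow> complex \<Rightarrow> complex" where
  "UM m v = m 0 * v^8 - m 1 * v^7 + m 2 * v^6 - m 3 * v^5 + m 4 * v^4 - m 5 * v^3 + m 6 * v^2 - m 7 * v + m 8"

lemma Pn_PnM: "Pn u h x = PnM (mm u) h x" unfolding Pn_def PnM_def ..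
lemma Pd_PdM: "Pd u h x = PdM (mm u) h x" unfolding Pd_def PdM_def ..

lemma PnM_hi: "h * hi = 1 \<Longrightarrow> PnM m h x = m 0 * x^4 - m 1 * x^3
     + (m 2 - 3*h*m 0 - m 8 * hi^3) * x^2
     + (2*h*m 1 - m 3 + m 7 * hi^2) * x
     + (h^2*m 0 - h*m 2 + m 4 - m 6 * hi + m 8 * hi^2)"
proof -
  assume "h * hi = 1"
  then have "hi = inverse h" by (metis inverse_unique)
  then show ?thesis unfolding PnM_def by (simp add: divide_inverse power_inverse)
qed

definition "P1F m h h2 x = x * (PdM m h x - h^3*h2*PnM m h x)"
definition "Q0F m h h2 q x = x * (- PdM m h x + h^3*h2*q*PnM m h x)"
definition "Q1F m h x = PdM m h x - h^4*PnM m h x"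
definition "P0F m h h2 q x = - PdM m h x * x^2 + PdM m h x * ((h - h2*q)*(h-h2)/h)
   + h^2*q*h2^2 * PnM m h x * x^2 - h^3*((h - h2*q)*(h-h2)) * PnM m h x"

lemma F1a:
  fixes h h2 v x g :: complex
  assumes "h * hi = 1" "x * v = v^2 + h" "g * v = v^2 + h2"
  shows "v^5 * (P1F m h h2 x - g * Q1F m h x) = h^3*(h - h2)*(h+v^2) * UM m v"
  unfolding P1F_def Q1F_def PdM_def UM_def PnM_hi[OF assms(1)] using assms by algebra

lemma F1b:
  fixes h h2 v x g :: complex
  assumes "h * hi = 1" "x * v = v^2 + h" "g * v = v^2 + h2"
  shows "v^6 * (P0F m h h2 q x - g * Q0F m h h2 q x) = h^2*(h+v^2)*(h2-h)*(h^2+h2*q*v^2) * UM m v"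
proof -
  have "(h - h2*q)*(h-h2)/h = (h - h2*q)*(h-h2)*hi" using assms(1) by (metis divide_inverse inverse_unique)
  then show ?thesis
  unfolding P0F_def Q0F_def PdM_def UM_def PnM_hi[OF assms(1)] using assms by algebra
qed

lemma F3:
  fixes h h2 v x gb :: complex
  assumes "h * hi = 1" "v * vi = 1" "x = (v^2 + h)*vi" "gb = (v^2 + h2*q)*vi"
  shows "v^5 * (Q1F m h x * gb + Q0F m h h2 q x) = h^3*(h2*q - h)*(h+v^2) * UM m v"
  unfolding Q1F_def Q0F_def PdM_def UM_def PnM_hi[OF assms(1)] using assms by algebra
lemma C2_0:
  fixes h h2 q v x gb g' hi vi :: complex
  assumes "h * hi = 1" "v * vi = 1" "x = (v^2 + h)*vi" "gb = (v^2 + h2*q)*vi" "g' = h*vi + h2*v*hi"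
  shows "(-1 * h^3*h2*x*gb + h^2*q*h2^2*x^2 - h^3*((h - h2*q)*(h-h2)) + g'*h^4*gb - g'*x*h^3*h2*q) * (x^4 - 3*h*x^2 + h^2) + (x*gb - x^2 + (h - h2*q)*(h-h2)*hi - g'*gb + g'*x) * (-1 * h^5*x^2 + h^6) = 0"
  using assms by algebra
lemma C2_1:
  fixes h h2 q v x gb g' hi vi :: complex
  assumes "h * hi = 1" "v * vi = 1" "x = (v^2 + h)*vi" "gb = (v^2 + h2*q)*vi" "g' = h*vi + h2*v*hi"
  shows "(-1 * h^3*h2*x*gb + h^2*q*h2^2*x^2 - h^3*((h - h2*q)*(h-h2)) + g'*h^4*gb - g'*x*h^3*h2*q) * (-1 * x^3 + 2*h*x) + (x*gb - x^2 + (h - h2*q)*(h-h2)*hi - g'*gb + g'*x) * (h^5*x) = 0"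
  using assms by algebra
lemma C2_2:
  fixes h h2 q v x gb g' hi vi :: complex
  assumes "h * hi = 1" "v * vi = 1" "x = (v^2 + h)*vi" "gb = (v^2 + h2*q)*vi" "g' = h*vi + h2*v*hi"
  shows "(-1 * h^3*h2*x*gb + h^2*q*h2^2*x^2 - h^3*((h - h2*q)*(h-h2)) + g'*h^4*gb - g'*x*h^3*h2*q) * (x^2 - h) + (x*gb - x^2 + (h - h2*q)*(h-h2)*hi - g'*gb + g'*x) * (-1 * h^5) = 0"
  using assms by algebra
lemma C2_3:
  fixes h h2 q v x gb g' hi vi :: complex
  assumes "h * hi = 1" "v * vi = 1" "x = (v^2 + h)*vi" "gb = (v^2 + h2*q)*vi" "g' = h*vi + h2*v*hi"
  shows "(-1 * h^3*h2*x*gb + h^2*q*h2^2*x^2 - h^3*((h - h2*q)*(h-h2)) + g'*h^4*gb - g'*x*h^3*h2*q) * (-1 * x) + (x*gb - x^2 + (h - h2*q)*(h-h2)*hi - g'*gb + g'*x) * (0) = 0"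
  using assms by algebra
lemma C2_4:
  fixes h h2 q v x gb g' hi vi :: complex
  assumes "h * hi = 1" "v * vi = 1" "x = (v^2 + h)*vi" "gb = (v^2 + h2*q)*vi" "g' = h*vi + h2*v*hi"
  shows "(-1 * h^3*h2*x*gb + h^2*q*h2^2*x^2 - h^3*((h - h2*q)*(h-h2)) + g'*h^4*gb - g'*x*h^3*h2*q) * (1) + (x*gb - x^2 + (h - h2*q)*(h-h2)*hi - g'*gb + g'*x) * (h^4) = 0"
  using assms by algebra
lemma C2_5:
  fixes h h2 q v x gb g' hi vi :: complex
  assumes "h * hi = 1" "v * vi = 1" "x = (v^2 + h)*vi" "gb = (v^2 + h2*q)*vi" "g' = h*vi + h2*v*hi"
  shows "(-1 * h^3*h2*x*gb + h^2*q*h2^2*x^2 - h^3*((h - h2*q)*(h-h2)) + g'*h^4*gb - g'*x*h^3*h2*q) * (0) + (x*gb - x^2 + (h - h2*q)*(h-h2)*hi - g'*gb + g'*x) * (-1 * h^3*x) = 0"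
  using assms by algebra
lemma C2_6:
  fixes h h2 q v x gb g' hi vi :: complex
  assumes "h * hi = 1" "v * vi = 1" "x = (v^2 + h)*vi" "gb = (v^2 + h2*q)*vi" "g' = h*vi + h2*v*hi"
  shows "(-1 * h^3*h2*x*gb + h^2*q*h2^2*x^2 - h^3*((h - h2*q)*(h-h2)) + g'*h^4*gb - g'*x*h^3*h2*q) * (-1 * hi) + (x*gb - x^2 + (h - h2*q)*(h-h2)*hi - g'*gb + g'*x) * (h^2*x^2 - h^3) = 0"
  using assms by algebra
lemma C2_7:
  fixes h h2 q v x gb g' hi vi :: complex
  assumes "h * hi = 1" "v * vi = 1" "x = (v^2 + h)*vi" "gb = (v^2 + h2*q)*vi" "g' = h*vi + h2*v*hi"
  shows "(-1 * h^3*h2*x*gb + h^2*q*h2^2*x^2 - h^3*((h - h2*q)*(h-h2)) + g'*h^4*gb - g'*x*h^3*h2*q) * (x*hi^2) + (x*gb - x^2 + (h - h2*q)*(h-h2)*hi - g'*gb + g'*x) * (-1 * h*x^3 + 2*h^2*x) = 0"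
  using assms by algebra
lemma C2_8:
  fixes h h2 q v x gb g' hi vi :: complex
  assumes "h * hi = 1" "v * vi = 1" "x = (v^2 + h)*vi" "gb = (v^2 + h2*q)*vi" "g' = h*vi + h2*v*hi"
  shows "(-1 * h^3*h2*x*gb + h^2*q*h2^2*x^2 - h^3*((h - h2*q)*(h-h2)) + g'*h^4*gb - g'*x*h^3*h2*q) * (-1 * x^2*hi^3 + hi^2) + (x*gb - x^2 + (h - h2*q)*(h-h2)*hi - g'*gb + g'*x) * (x^4 - 3*h*x^2 + h^2) = 0"
  using assms by algebra

lemma F2:
  fixes h h2 q v x gb g' hi vi :: complex
  assumes "h * hi = 1" "v * vi = 1" "x = (v^2 + h)*vi" "gb = (v^2 + h2*q)*vi" "g' = h*vi + h2*v*hi"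
  shows "P1F m h h2 x * gb + P0F m h h2 q x - g' * (Q1F m h x * gb + Q0F m h h2 q x) = 0"
proof -
  have c: "(h - h2*q)*(h-h2)/h = (h - h2*q)*(h-h2)*hi" using assms(1) by (metis divide_inverse inverse_unique)
  have pn: "PnM m h x = m 0 * (x^4 - 3*h*x^2 + h^2) + m 1 * (-1 * x^3 + 2*h*x) + m 2 * (x^2 - h) + m 3 * (-1 * x) + m 4 * (1) + m 5 * (0) + m 6 * (-1 * hi) + m 7 * (x*hi^2) + m 8 * (-1 * x^2*hi^3 + hi^2)"
    unfolding PnM_hi[OF assms(1)] by algebra
  have pd: "PdM m h x = m 0 * (-1 * h^5*x^2 + h^6) + m 1 * (h^5*x) + m 2 * (-1 * h^5) + m 3 * (0) + m 4 * (h^4) + m 5 * (-1 * h^3*x) + m 6 * (h^2*x^2 - h^3) + m 7 * (-1 * h*x^3 + 2*h^2*x) + m 8 * (x^4 - 3*h*x^2 + h^2)"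
    unfolding PdM_def by algebra
  have "P1F m h h2 x * gb + P0F m h h2 q x - g' * (Q1F m h x * gb + Q0F m h h2 q x)
     = (-1 * h^3*h2*x*gb + h^2*q*h2^2*x^2 - h^3*((h - h2*q)*(h-h2)) + g'*h^4*gb - g'*x*h^3*h2*q) * PnM m h x + (x*gb - x^2 + (h - h2*q)*(h-h2)*hi - g'*gb + g'*x) * PdM m h x"
    unfolding P1F_def P0F_def Q1F_def Q0F_def c by algebra
  also have "\<dots> = m 0 * ((-1 * h^3*h2*x*gb + h^2*q*h2^2*x^2 - h^3*((h - h2*q)*(h-h2)) + g'*h^4*gb - g'*x*h^3*h2*q) * (x^4 - 3*h*x^2 + h^2) + (x*gb - x^2 + (h - h2*q)*(h-h2)*hi - g'*gb + g'*x) * (-1 * h^5*x^2 + h^6)) + m 1 * ((-1 * h^3*h2*x*gb + h^2*q*h2^2*x^2 - h^3*((h - h2*q)*(h-h2)) + g'*h^4*gb - g'*x*h^3*h2*q) * (-1 * x^3 + 2*h*x) + (x*gb - x^2 + (h - h2*q)*(h-h2)*hi - g'*gb + g'*x) * (h^5*x)) + m 2 * ((-1 * h^3*h2*x*gb + h^2*q*h2^2*x^2 - h^3*((h - h2*q)*(h-h2)) + g'*h^4*gb - g'*x*h^3*h2*q) * (x^2 - h) + (x*gb - x^2 + (h - h2*q)*(h-h2)*hi - g'*gb + g'*x) * (-1 * h^5)) + m 3 * ((-1 * h^3*h2*x*gb + h^2*q*h2^2*x^2 - h^3*((h - h2*q)*(h-h2)) + g'*h^4*gb - g'*x*h^3*h2*q)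 * (-1 * x) + (x*gb - x^2 + (h - h2*q)*(h-h2)*hi - g'*gb + g'*x) * (0)) + m 4 * ((-1 * h^3*h2*x*gb + h^2*q*h2^2*x^2 - h^3*((h - h2*q)*(h-h2)) + g'*h^4*gb - g'*x*h^3*h2*q) * (1) + (x*gb - x^2 + (h - h2*q)*(h-h2)*hi - g'*gb + g'*x) * (h^4)) + m 5 * ((-1 * h^3*h2*x*gb + h^2*q*h2^2*x^2 - h^3*((h - h2*q)*(h-h2)) + g'*h^4*gb - g'*x*h^3*h2*q) * (0) + (x*gb - x^2 + (h - h2*q)*(h-h2)*hi - g'*gb + g'*x) * (-1 * h^3*x)) + m 6 * ((-1 * h^3*h2*x*gb + h^2*q*h2^2*x^2 - h^3*((h - h2*q)*(h-h2)) + g'*h^4*gb - g'*x*h^3*h2*q) * (-1 * hi) + (x*gb - x^2 + (h - h2*q)*(h-h2)*hi - g'*gb + g'*x) * (h^2*x^2 - h^3)) + m 7 * ((-1 * h^3*h2*x*gb + h^2*q*h2^2*x^2 - h^3*((h - h2*q)*(h-h2)) + g'*h^4*gb - g'*x*h^3*h2*q) * (x*hi^2) + (x*gb - x^2 + (h - h2*q)*(h-h2)*hi - g'*gb + g'*x) * (-1 * h*x^3 + 2*h^2*x)) + m 8 * ((-1 * h^3*h2*x*gb + h^2*q*h2^2*x^2 - h^3*((h - h2*q)*(h-h2)) + g'*h^4*gb - g'*x*h^3*h2*q) * (-1 * x^2*hi^3 + hi^2) + (x*gb - x^2 + (h - h2*q)*(h-h2)*hi - g'*gb + g'*x) * (x^4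 - 3*h*x^2 + h^2))"
    unfolding pn pd by algebra
  also have "\<dots> = 0"
    unfolding C2_0[OF assms] C2_1[OF assms] C2_2[OF assms] C2_3[OF assms] C2_4[OF assms]
      C2_5[OF assms] C2_6[OF assms] C2_7[OF assms] C2_8[OF assms] by simp
  finally show ?thesis .
qed

definition "pnP (m::nat\<Rightarrow>complex) h = [: h^2*m 0 - h*m 2 + m 4 - m 6 / h + m 8 / h^2, 2*h*m 1 - m 3 + m 7 / h^2,
   m 2 - 3*h*m 0 - m 8 / h^3, - m 1, m 0 :]"
definition "pdP (m::nat\<Rightarrow>complex) h = [: h^6*m 0 - h^5*m 2 + h^4*m 4 - h^3*m 6 + h^2*m 8, 2*h^2*m 7 - h^3*m 5 + h^5*m 1,
   h^2*m 6 - 3*h*m 8 - h^5*m 0, - h*m 7, m 8 :]"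
definition "p1P m h h2 = pdP m h - smult (h^3*h2) (pnP m h)"
definition "q0P m h h2 q = smult (h^3*h2*q) (pnP m h) - pdP m h"
definition "q1P m h = [: coeff (pdP m h) 1 - h^4*coeff (pnP m h) 1, coeff (pdP m h) 2 - h^4*coeff (pnP m h) 2,
    coeff (pdP m h) 3 - h^4*coeff (pnP m h) 3, coeff (pdP m h) 4 - h^4*coeff (pnP m h) 4 :]"
definition "p0P m h h2 q = (let C = (h - h2*q)*(h-h2); a = coeff (pnP m h); d = coeff (pdP m h) in
   [: C/h*d 1 - h^3*C*a 1, - d 0 + C/h*d 2 + h^2*q*h2^2*a 0 - h^3*C*a 2,
      - d 1 + C/h*d 3 + h^2*q*h2^2*a 1 - h^3*C*a 3, - d 2 + C/h*d 4 + h^2*q*h2^2*a 2 - h^3*C*a 4,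
      - d 3 + h^2*q*h2^2*a 3 :])"

lemma poly_le: "degree (p::complex poly) \<le> n \<Longrightarrow> poly p x = (\<Sum>i\<le>n. coeff p i * x^i)"
proof -
  assume d: "degree p \<le> n"
  have "poly p x = (\<Sum>i\<le>degree p. coeff p i * x^i)" by (rule poly_altdef)
  also have "\<dots> = (\<Sum>i\<le>n. coeff p i * x^i)"
    by (rule sum.mono_neutral_left) (use d in \<open>auto simp: coeff_eq_0\<close>)
  finally show ?thesis .
qed

lemma deg5: "degree [:a,b,c,d,e:] \<le> 4"
  by (rule degree_le) (auto simp: coeff_pCons split: nat.split)
lemma deg4: "degree [:a,b,c,d:] \<le> 4"
  by (rule degree_le) (auto simp: coeff_pCons split: nat.split)

lemma poly4: "degree (p::complex poly) \<le> 4 \<Longrightarrow> poly p x = coeff p 0 + coeff p 1 * x + coeff p 2 * x^2 + coeff p 3 * x^3 + coeff p 4 * x^4"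
  by (simp add: poly_le eval_nat_numeral algebra_simps)

lemma poly_pnP: "poly (pnP m h) x = PnM m h x"
  unfolding pnP_def PnM_def by (simp add: algebra_simps power2_eq_square power3_eq_cube power4_eq_xxxx)
lemma poly_pdP: "poly (pdP m h) x = PdM m h x"
  unfolding pdP_def PdM_def by (simp add: algebra_simps power2_eq_square power3_eq_cube power4_eq_xxxx)

lemma deg_pnP: "degree (pnP m h) \<le> 4" unfolding pnP_def by (rule deg5)
lemma deg_pdP: "degree (pdP m h) \<le> 4" unfolding pdP_def by (rule deg5)
lemma deg_p1P: "degree (p1P m h h2) \<le> 4" unfolding p1P_def
  by (intro degree_diff_le deg_pdP order.trans[OF degree_smult_le deg_pnP])
lemma deg_q0P: "degree (q0P m h h2 q) \<le> 4" unfolding q0P_def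
  by (intro degree_diff_le deg_pdP order.trans[OF degree_smult_le deg_pnP])
lemma deg_q1P: "degree (q1P m h) \<le> 4" unfolding q1P_def by (rule deg4)
lemma deg_p0P: "degree (p0P m h h2 q) \<le> 4" unfolding p0P_def Let_def by (rule deg5)

lemma P1F_red: "P1F m h h2 x = x * poly (p1P m h h2) x"
  unfolding P1F_def p1P_def by (simp add: poly_pnP poly_pdP)
lemma Q0F_red: "Q0F m h h2 q x = x * poly (q0P m h h2 q) x"
  unfolding Q0F_def q0P_def by (simp add: poly_pnP poly_pdP algebra_simps)

lemma c0_rel: "h \<noteq> 0 \<Longrightarrow> coeff (pdP m h) 0 = h^4 * coeff (pnP m h) 0"
  unfolding pdP_def pnP_def by (simp add: field_simps eval_nat_numeral)

lemma Q1F_red: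
  assumes "h \<noteq> 0" shows "Q1F m h x = x * poly (q1P m h) x"
proof -
  have e: "poly (q1P m h) x = (coeff (pdP m h) 1 - h^4*coeff (pnP m h) 1) + x * ((coeff (pdP m h) 2 - h^4*coeff (pnP m h) 2)
     + x * ((coeff (pdP m h) 3 - h^4*coeff (pnP m h) 3) + x * (coeff (pdP m h) 4 - h^4*coeff (pnP m h) 4)))"
    unfolding q1P_def by simp
  show ?thesis
    unfolding Q1F_def poly_pnP[symmetric] poly_pdP[symmetric] poly4[OF deg_pnP] poly4[OF deg_pdP] e c0_rel[OF assms]
    by algebra
qed

lemma c4_rel: "coeff (pdP m h) 4 = m 8" "coeff (pnP m h) 4 = m 0"
  unfolding pdP_def pnP_def by (simp_all add: eval_nat_numeral)

lemma P0F_red: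
  assumes "h \<noteq> 0" "m 8 = h^2*q*h2^2*m 0" shows "P0F m h h2 q x = x * poly (p0P m h h2 q) x"
proof -
  define C where "C = (h - h2*q)*(h-h2)"
  define a where "a = coeff (pnP m h)"
  define d where "d = coeff (pdP m h)"
  have e: "poly (p0P m h h2 q) x = (C/h*d 1 - h^3*C*a 1) + x*((- d 0 + C/h*d 2 + h^2*q*h2^2*a 0 - h^3*C*a 2)
      + x*((- d 1 + C/h*d 3 + h^2*q*h2^2*a 1 - h^3*C*a 3) + x*((- d 2 + C/h*d 4 + h^2*q*h2^2*a 2 - h^3*C*a 4)
      + x*(- d 3 + h^2*q*h2^2*a 3))))"
    unfolding p0P_def Let_def C_def a_def d_def by simp
  have d0: "d 0 = h^4 * a 0" unfolding a_def d_def using c0_rel[OF assms(1)] .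
  have d4: "d 4 = h^2*q*h2^2* a 4" unfolding a_def d_def c4_rel assms(2) ..
  have Ch: "C/h * h = C" using assms(1) by simp
  show ?thesis
    unfolding P0F_def poly_pnP[symmetric] poly_pdP[symmetric] poly4[OF deg_pnP] poly4[OF deg_pdP] e
      a_def[symmetric] d_def[symmetric] C_def[symmetric]
    using d0 d4 Ch by algebra
qed

definition "Ap (a::nat\<Rightarrow>nat\<Rightarrow>complex) j = [:a 0 j, a 1 j, a 2 j, a 3 j:]"

lemma bihom_exp: "bihom a x P Q = poly (Ap a 0) x * Q^2 + poly (Ap a 1) x * P * Q + poly (Ap a 2) x * P^2"
  unfolding bihom_def Ap_def by (simp add: eval_nat_numeral algebra_simps)

lemma bieval_exp: "bieval a x y = poly (Ap a 0) x + poly (Ap a 1) x * y + poly (Ap a 2) x * y^2"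
  unfolding bieval_def Ap_def by (simp add: eval_nat_numeral algebra_simps)

lemma bihom_scale: "bihom a x (g*Q) Q = Q^2 * bieval a x g"
  unfolding bihom_exp bieval_exp by (simp add: algebra_simps power2_eq_square)

definition "NN a p1 p0 q1 q0 (j::nat) = (if j = 0 then Ap a 0 * q0^2 + Ap a 1 * p0 * q0 + Ap a 2 * p0^2
   else if j = 1 then smult 2 (Ap a 0 * q1 * q0) + Ap a 1 * (p1*q0 + p0*q1) + smult 2 (Ap a 2 * p1 * p0)
   else Ap a 0 * q1^2 + Ap a 1 * p1 * q1 + Ap a 2 * p1^2)"

lemma bihom_NN:
  fixes p1 p0 q1 q0 :: "complex poly"
  shows "bihom a x (poly p1 x * y + poly p0 x) (poly q1 x * y + poly q0 x)
   = poly (NN a p1 p0 q1 q0 0) x + poly (NN a p1 p0 q1 q0 1) x * y + poly (NN a p1 p0 q1 q0 2) x * y^2"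
  unfolding bihom_exp NN_def by (simp add: algebra_simps power2_eq_square)

lemma deg_Ap: "degree (Ap a j) \<le> 3"
  unfolding Ap_def by (rule degree_le) (auto simp: coeff_pCons split: nat.split)

lemma deg_mul_le: "degree (p::complex poly) \<le> m \<Longrightarrow> degree q \<le> n \<Longrightarrow> degree (p*q) \<le> m + n"
  by (meson add_mono degree_mult_le order.trans)

lemma deg_NN:
  assumes "degree p1 \<le> 4" "degree p0 \<le> 4" "degree q1 \<le> 4" "degree q0 \<le> 4"
  shows "degree (NN a p1 p0 q1 q0 j) \<le> 11"
proof -
  have t: "degree (Ap a i * r * s) \<le> 11" if "degree r \<le> 4" "degree s \<le> 4" for i r s
    using deg_mul_le[OF deg_mul_le[OF deg_Ap that(1)] that(2)] by simp
  have t2: "degree (Ap a i * (r * s)) \<le> 11" if "degree r \<le> 4" "degree s \<le> 4" for i r s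
    using t[OF that] by (simp add: mult.assoc)
  show ?thesis
    unfolding NN_def power2_eq_square
    using assms
    by (auto intro!: degree_add_le t t2 order.trans[OF degree_smult_le] simp: distrib_left)
qed

lemma prod_lin_dvd:
  fixes p :: "complex poly"
  assumes "finite S" "inj_on f S" "\<forall>k\<in>S. poly p (f k) = 0"
  shows "(\<Prod>k\<in>S. [:- f k, 1:]) dvd p"
  using assms
proof (induction S rule: finite_induct)
  case empty then show ?case by simp
next
  case (insert a S)
  have "inj_on f S" "\<forall>k\<in>S. poly p (f k) = 0" using insert.prems by (auto simp: inj_on_insert)
  then have "(\<Prod>k\<in>S. [:- f k, 1:]) dvd p" using insert.IH by blast
  then obtain r where r: "p = (\<Prod>k\<in>S. [:- f k, 1:]) * r" by (auto elim: dvdE)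
  have ne: "poly (\<Prod>k\<in>S. [:- f k, 1:]) (f a) \<noteq> 0"
  proof -
    have "\<forall>k\<in>S. f a \<noteq> f k" using insert.hyps(2) insert.prems(1) by (auto simp: inj_on_def)
    then show ?thesis by (simp add: poly_prod insert(1))
  qed
  have "poly p (f a) = 0" using insert.prems(2) by simp
  then have "poly r (f a) = 0" using ne r by simp
  then have "[:- f a, 1:] dvd r" by (simp add: poly_eq_0_iff_dvd)
  then have "[:- f a, 1:] * (\<Prod>k\<in>S. [:- f k, 1:]) dvd (\<Prod>k\<in>S. [:- f k, 1:]) * r"
    by (metis mult.commute mult_dvd_mono dvd_refl)
  then show ?case using r insert(1,2) by simp
qed

lemma deg_prod_lin: "finite S \<Longrightarrow> degree (\<Prod>k\<in>S. [:- f k, 1::complex:]) = card S"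
  by (subst degree_prod_sum_eq) auto

lemma prod_lin_nz: "(\<Prod>k\<in>S. [:- f k, 1::complex:]) \<noteq> 0"
  by (cases "finite S") (auto simp: prod_zero_iff)

lemma cont_zero:
  fixes \<psi> :: "complex \<Rightarrow> complex"
  assumes "isCont \<psi> a" "eventually (\<lambda>v. \<psi> v = 0) (at a)"
  shows "\<psi> a = 0"
proof -
  have "(\<psi> \<longlongrightarrow> \<psi> a) (at a)" using assms(1) isCont_def by blast
  moreover have "(\<psi> \<longlongrightarrow> 0) (at a)" using tendsto_eventually[OF assms(2)] .
  ultimately show ?thesis using tendsto_unique[OF at_neq_bot] by blast
qed

lemma pf_diff: "p \<in> polyfun \<Longrightarrow> r \<in> polyfun \<Longrightarrow> (\<lambda>x. p x - r x) \<in> polyfun"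
proof -
  assume "p \<in> polyfun" "r \<in> polyfun"
  then have "(\<lambda>x. p x + (\<lambda>x. -1) x * r x) \<in> polyfun" by (intro pf_add pf_mul pf_const)
  then show ?thesis by simp
qed

lemma pf_prod: "finite S \<Longrightarrow> (\<And>i. i \<in> S \<Longrightarrow> f i \<in> polyfun) \<Longrightarrow> (\<lambda>x. \<Prod>i\<in>S. f i x) \<in> polyfun"
proof (induction S rule: finite_induct)
  case empty then show ?case using pf_const[of 1] by simp
next
  case (insert a S)
  then have "(\<lambda>x. f a x * (\<lambda>x. \<Prod>i\<in>S. f i x) x) \<in> polyfun" by (intro pf_mul) auto
  then show ?case using insert by simp
qed

lemma pf_pow: "p \<in> polyfun \<Longrightarrow> (\<lambda>x. p x ^ n) \<in> polyfun"
proof (induction n)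
  case 0 then show ?case using pf_const[of 1] by simp
next
  case (Suc n)
  then have "(\<lambda>x. p x * (\<lambda>x. p x ^ n) x) \<in> polyfun" by (intro pf_mul) auto
  then show ?case by simp
qed

lemma core_pn:
  fixes h1 h2 q fb gb g a b c :: complex
  assumes "h1 * a = 1" "h2 * b = 1" "q * c = 1"
  shows "(h1^4*h2^2*c^3) * ((fb*q*a - gb*(b*c))*(fb*q*a - g*b) - (q*a - b*c)*(q*a - b)*(h1*c))
   = g * ((h1*c)^4*gb - fb*(h1*c)^3*h2*q) - (fb*(h1*c)^3*h2*gb - (h1*c)^2*q*h2^2 * fb^2 + (h1*c)^3*(((h1*c) - h2*q)*((h1*c)-h2)))"
  using assms by algebra

lemma core_inv:
  fixes h1 h2 q fb gb g pn pd a b c :: complex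
  assumes "h1 * a = 1" "h2 * b = 1" "q * c = 1"
  shows "pd * ((fb - gb)*(fb - g) - (h1*c - h2*q)*(h1*c - h2)*(q*a))
     - (h1^4*h2^2*c^3) * pn * ((fb*q*a - gb*(b*c))*(fb*q*a - g*b) - (q*a - b*c)*(q*a - b)*(h1*c))
   = g * ((pd - (h1*c)^4*pn)*gb + fb*(- pd + (h1*c)^3*h2*q*pn))
     - (fb*(pd - (h1*c)^3*h2*pn)*gb + (- pd * fb^2 + pd * (((h1*c) - h2*q)*((h1*c)-h2)*(q*a))
        + (h1*c)^2*q*h2^2 * pn * fb^2 - (h1*c)^3*(((h1*c) - h2*q)*((h1*c)-h2)) * pn))"
proof -
  have "(h1^4*h2^2*c^3) * pn * ((fb*q*a - gb*(b*c))*(fb*q*a - g*b) - (q*a - b*c)*(q*a - b)*(h1*c))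
     = pn * ((h1^4*h2^2*c^3) * ((fb*q*a - gb*(b*c))*(fb*q*a - g*b) - (q*a - b*c)*(q*a - b)*(h1*c)))"
    by (simp add: ac_simps)
  also have "\<dots> = pn * (g * ((h1*c)^4*gb - fb*(h1*c)^3*h2*q) - (fb*(h1*c)^3*h2*gb - (h1*c)^2*q*h2^2 * fb^2 + (h1*c)^3*(((h1*c) - h2*q)*((h1*c)-h2))))"
    unfolding core_pn[OF assms] ..
  finally have e: "(h1^4*h2^2*c^3) * pn * ((fb*q*a - gb*(b*c))*(fb*q*a - g*b) - (q*a - b*c)*(q*a - b)*(h1*c))
     = pn * (g * ((h1*c)^4*gb - fb*(h1*c)^3*h2*q) - (fb*(h1*c)^3*h2*gb - (h1*c)^2*q*h2^2 * fb^2 + (h1*c)^3*(((h1*c) - h2*q)*((h1*c)-h2))))" .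
  show ?thesis unfolding e by (simp add: algebra_simps power2_eq_square)
qed

lemma core:
  fixes h1 h2 q fb gb g pn pd :: complex
  assumes "h1 \<noteq> 0" "h2 \<noteq> 0" "q \<noteq> 0"
  shows "pd * ((fb - gb)*(fb - g) - (h1/q - h2*q)*(h1/q - h2)*(q/h1))
     - (h1^4*h2^2/q^3) * pn * ((fb*q/h1 - gb/(h2*q))*(fb*q/h1 - g/h2) - (q/h1 - 1/(h2*q))*(q/h1 - 1/h2)*(h1/q))
   = g * ((pd - (h1/q)^4*pn)*gb + fb*(- pd + (h1/q)^3*h2*q*pn))
     - (fb*(pd - (h1/q)^3*h2*pn)*gb + (- pd * fb^2 + pd * (((h1/q) - h2*q)*((h1/q)-h2)/(h1/q))
        + (h1/q)^2*q*h2^2 * pn * fb^2 - (h1/q)^3*(((h1/q) - h2*q)*((h1/q)-h2)) * pn))"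
proof -
  have e: "\<And>x. x / (h1/q) = x * (q * inverse h1)" "\<And>x. x / (h1 * inverse q) = x * (q * inverse h1)" "h1/q = h1 * inverse q" "q/h1 = q * inverse h1" "h1^4*h2^2/q^3 = h1^4*h2^2*inverse q^3"
    "fb*q/h1 = fb*q*inverse h1" "gb/(h2*q) = gb*(inverse h2*inverse q)" "g/h2 = g * inverse h2"
    "1/(h2*q) = inverse h2 * inverse q" "1/h2 = inverse h2"
    using assms by (auto simp: field_simps)
  show ?thesis apply (simp only: e)
    by (rule core_inv) (use assms in auto)
qed

lemma unique_lin:
  fixes N D :: "complex \<Rightarrow> complex"
  assumes P: "\<And>g. Pr g \<longleftrightarrow> N g / D g = R" and R: "R \<noteq> 0"
    and lin: "\<And>g. N g - R * D g = s * (g*Qc - Pc)" and s: "s \<noteq> 0"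
    and Daff: "\<And>g. D g = d0 + d1 * g" and ex: "\<exists>!g. Pr g"
  shows "Qc \<noteq> 0 \<and> (THE g. Pr g) = Pc / Qc"
proof -
  obtain g0 where g0: "Pr g0" "\<And>g. Pr g \<Longrightarrow> g = g0" using ex by blast
  have D0: "D g0 \<noteq> 0"
  proof
    assume "D g0 = 0"
    then have z: "N g0 / D g0 = 0" by simp
    have "N g0 / D g0 = R" using g0(1) P by blast
    with z R show False by simp
  qed
  have "N g0 / D g0 = R" using g0(1) P by simp
  then have "N g0 = R * D g0" using D0 by (simp add: divide_eq_eq)
  then have "s * (g0*Qc - Pc) = 0" using lin[of g0] by simp
  then have e: "g0 * Qc = Pc" using s by simp
  have Qc: "Qc \<noteq> 0"
  proof
    assume Q0: "Qc = 0"
    then have Pc: "Pc = 0" using e by simp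
    have all: "Pr g" if "D g \<noteq> 0" for g
    proof -
      have "N g - R * D g = 0" using lin[of g] Q0 Pc by simp
      then have "N g = R * D g" by simp
      then have "N g / D g = R" using that by simp
      then show ?thesis using P by simp
    qed
    have "D (g0+1) \<noteq> 0 \<or> D (g0+2) \<noteq> 0"
    proof (rule ccontr)
      assume "\<not> ?thesis"
      then have a: "d0 + d1 * (g0+1) = 0" "d0 + d1*(g0+2) = 0" using Daff by auto
      have "d1 = (d0 + d1*(g0+2)) - (d0 + d1*(g0+1))" by (simp add: algebra_simps)
      then have "d1 = 0" using a by simp
      then have "d0 = 0" using a by simp
      then show False using D0 Daff[of g0] \<open>d1 = 0\<close> by simp
    qed
    then show False
    proof
      assume "D (g0+1) \<noteq> 0"
      then have "g0 + 1 = g0" using all g0(2) by blast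
      then show False by simp
    next
      assume "D (g0+2) \<noteq> 0"
      then have "g0 + 2 = g0" using all g0(2) by blast
      then show False by simp
    qed
  qed
  have "(THE g. Pr g) = g0" by (rule the_equality) (use g0 in blast)+
  then show ?thesis using Qc e by (simp add: field_simps)
qed

definition GEN :: "complex \<Rightarrow> complex \<Rightarrow> (nat \<Rightarrow> complex) \<Rightarrow> complex \<Rightarrow> bool" where
 "GEN h1 h2 u z \<longleftrightarrow> (let P = (\<Prod>i\<in>{1..8}. u i) in
   h1 \<noteq> 0 \<and> h2 \<noteq> 0 \<and> z \<noteq> 0 \<and> (\<forall>i\<in>{1..8}. u i \<noteq> 0) \<and> P \<noteq> h1*h2^3 \<and> P^2 \<noteq> h1^3*h2^5 \<and>
   (\<forall>i\<in>{1..8}. P + h1*h2^2*(u i)^2 \<noteq> 0) \<and>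
   (\<forall>i\<in>{1..8}. \<forall>k\<in>{1..8}. i \<noteq> k \<longrightarrow> u i \<noteq> u k) \<and>
   (\<forall>i\<in>{1..8}. \<forall>k\<in>{1..8}. P \<noteq> h1*h2^2*u i*u k) \<and>
   (\<forall>k\<in>{1..8}. z \<noteq> u k \<and> P \<noteq> h1*h2^2*z*u k \<and> h1 \<noteq> z*u k \<and> z*P \<noteq> h1^2*h2^2*u k) \<and>
   P + h1*h2^2*z^2 \<noteq> 0 \<and> h1^3*h2^2 + z^2*P \<noteq> 0)"

lemma GEN_facts:
  assumes "GEN h1 h2 u z"
  defines "qv \<equiv> qq h1 h2 u" and "hv \<equiv> h1 / qq h1 h2 u"
  shows "h1 \<noteq> 0" "h2 \<noteq> 0" "z \<noteq> 0" "\<forall>i\<in>{1..8}. u i \<noteq> 0" "qv \<noteq> 0" "hv \<noteq> 0" "hv \<noteq> h2" "h2*qv \<noteq> hv"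
    "\<forall>i\<in>{1..8}. (u i)^2 + hv \<noteq> 0" "\<forall>i\<in>{1..8}. \<forall>k\<in>{1..8}. i \<noteq> k \<longrightarrow> u i \<noteq> u k"
    "\<forall>i\<in>{1..8}. \<forall>k\<in>{1..8}. u i * u k \<noteq> hv"
    "\<forall>k\<in>{1..8}. z \<noteq> u k \<and> z * u k \<noteq> hv \<and> h1/z \<noteq> u k \<and> (h1/z) * u k \<noteq> hv"
    "z^2 + hv \<noteq> 0" "(h1/z)^2 + hv \<noteq> 0" "(\<Prod>i\<in>{1..8}. u i) = hv^2*qv*h2^2"
proof -
  define P where "P = (\<Prod>i\<in>{1..8}. u i)"
  have G: "h1 \<noteq> 0" "h2 \<noteq> 0" "z \<noteq> 0" "\<forall>i\<in>{1..8}. u i \<noteq> 0" "P \<noteq> h1*h2^3" "P^2 \<noteq> h1^3*h2^5"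
   "\<forall>i\<in>{1..8}. P + h1*h2^2*(u i)^2 \<noteq> 0"
   "\<forall>i\<in>{1..8}. \<forall>k\<in>{1..8}. i \<noteq> k \<longrightarrow> u i \<noteq> u k"
   "\<forall>i\<in>{1..8}. \<forall>k\<in>{1..8}. P \<noteq> h1*h2^2*u i*u k"
   "\<forall>k\<in>{1..8}. z \<noteq> u k \<and> P \<noteq> h1*h2^2*z*u k \<and> h1 \<noteq> z*u k \<and> z*P \<noteq> h1^2*h2^2*u k"
   "P + h1*h2^2*z^2 \<noteq> 0" "h1^3*h2^2 + z^2*P \<noteq> 0"
    using assms(1) unfolding GEN_def Let_def P_def by auto
  have P0: "P \<noteq> 0" unfolding P_def using G(4) by simp
  have q: "qv = h1^2*h2^2/P" unfolding qv_def qq_def P_def ..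
  have h: "hv = P/(h1*h2^2)" unfolding hv_def qv_def[symmetric] q using G(1,2) P0 by (simp add: field_simps power2_eq_square)
  show "h1 \<noteq> 0" "h2 \<noteq> 0" "z \<noteq> 0" "\<forall>i\<in>{1..8}. u i \<noteq> 0" using G by auto
  show "qv \<noteq> 0" unfolding q using G(1,2) P0 by simp
  show "hv \<noteq> 0" unfolding h using G(1,2) P0 by simp
  show "hv \<noteq> h2" unfolding h using G(1,2,5) by (auto simp: field_simps power2_eq_square power3_eq_cube)
  show "h2*qv \<noteq> hv" unfolding h q using G(1,2,6) P0
    by (auto simp: field_simps eval_nat_numeral)
  show "\<forall>i\<in>{1..8}. (u i)^2 + hv \<noteq> 0" unfolding h using G(1,2,7)
    by (auto simp: field_simps add.commute)
  show "\<forall>i\<in>{1..8}. \<forall>k\<in>{1..8}. i \<noteq> k \<longrightarrow> u i \<noteq> u k" using G(8) .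
  show "\<forall>i\<in>{1..8}. \<forall>k\<in>{1..8}. u i * u k \<noteq> hv" unfolding h using G(1,2,9)
    by (auto simp: field_simps mult.commute mult.left_commute)
  show "\<forall>k\<in>{1..8}. z \<noteq> u k \<and> z * u k \<noteq> hv \<and> h1/z \<noteq> u k \<and> (h1/z) * u k \<noteq> hv"
    unfolding h using G(1,2,3,10) by (auto simp: field_simps mult.commute mult.left_commute power2_eq_square)
  show "z^2 + hv \<noteq> 0" unfolding h using G(1,2,11) by (auto simp: field_simps add.commute)
  show "(h1/z)^2 + hv \<noteq> 0" unfolding h using G(1,2,3,12) by (auto simp: field_simps add.commute power2_eq_square eval_nat_numeral)
  show "(\<Prod>i\<in>{1..8}. u i) = hv^2*qv*h2^2" unfolding P_def[symmetric] h q using G(1,2) P0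
    by (simp add: field_simps power2_eq_square)
qed

lemma Upoly_eval: "poly (Upoly u) v = (\<Prod>i\<in>{1..8}. (v - u i))"
  unfolding Upoly_def poly_prod by simp

lemma deg_Upoly: "degree (Upoly u) = 8"
  unfolding Upoly_def by (subst deg_prod_lin) auto

lemma sum9: "(\<Sum>i\<le>(8::nat). f i) = f 0 + f 1 + f 2 + f 3 + f 4 + f 5 + f 6 + f 7 + (f 8 :: complex)"
  by (simp add: eval_nat_numeral sum.atMost_Suc)

lemma UM_mm: "UM (mm u) v = poly (Upoly u) v"
proof -
  have "poly (Upoly u) v = (\<Sum>i\<le>8. coeff (Upoly u) i * v^i)" by (rule poly_le) (simp add: deg_Upoly)
  then show ?thesis unfolding sum9 UM_def mm_def by (simp add: algebra_simps)
qed

lemma mm0: "mm u 0 = 1"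
proof -
  have "coeff (Upoly u) 8 = lead_coeff (Upoly u)" by (simp add: deg_Upoly)
  also have "\<dots> = 1" unfolding Upoly_def lead_coeff_prod by simp
  finally show ?thesis unfolding mm_def by simp
qed

lemma mm8: "mm u 8 = (\<Prod>i\<in>{1..8}. u i)"
proof -
  have "mm u 8 = poly (Upoly u) 0" unfolding mm_def by (simp add: poly_0_coeff_0)
  also have "\<dots> = (\<Prod>i\<in>{1..8}. - u i)" unfolding Upoly_eval by simp
  also have "\<dots> = (\<Prod>i\<in>{1..8}. u i)" by (simp add: prod_uminus)
  finally show ?thesis .
qed

lemma UM_U: "UM (mm u) v = (\<Prod>i\<in>{1..8}. (v - u i))"
  unfolding UM_mm Upoly_eval ..

context
  fixes h1 h2 z :: complex and u :: "nat \<Rightarrow> complex"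
  assumes gen: "GEN h1 h2 u z"
begin

abbreviation "qv \<equiv> qq h1 h2 u"
abbreviation "hv \<equiv> h1 / qq h1 h2 u"
abbreviation "pp1 \<equiv> p1P (mm u) (h1 / qq h1 h2 u) h2"
abbreviation "pp0 \<equiv> p0P (mm u) (h1 / qq h1 h2 u) h2 (qq h1 h2 u)"
abbreviation "qq1 \<equiv> q1P (mm u) (h1 / qq h1 h2 u)"
abbreviation "qq0 \<equiv> q0P (mm u) (h1 / qq h1 h2 u) h2 (qq h1 h2 u)"
abbreviation "Uv v \<equiv> (\<Prod>i\<in>{1..8}. (v - u i))"

lemmas fa = GEN_facts[OF gen]

lemma hv_inv: "hv * inverse hv = 1" using fa(6) by simp

lemma R1: "P1F (mm u) hv h2 x = x * poly pp1 x" by (rule P1F_red)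
lemma R2: "Q0F (mm u) hv h2 qv x = x * poly qq0 x" by (rule Q0F_red)
lemma R3: "Q1F (mm u) hv x = x * poly qq1 x" by (rule Q1F_red[OF fa(6)])
lemma R4: "P0F (mm u) hv h2 qv x = x * poly pp0 x"
  by (rule P0F_red[OF fa(6)]) (unfold mm0 mm8, use fa(15) in simp)

lemma fbar_mul: "v \<noteq> 0 \<Longrightarrow> fbar h1 qv v * v = v^2 + hv"
  unfolding fbar_def using fa(5) by (simp add: field_simps power2_eq_square)
lemma fbar_eq: "v \<noteq> 0 \<Longrightarrow> fbar h1 qv v = (v^2 + hv) * inverse v"
  unfolding fbar_def using fa(5) by (simp add: field_simps power2_eq_square)
lemma gfun_mul: "v \<noteq> 0 \<Longrightarrow> gfun h2 v * v = v^2 + h2"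
  unfolding gfun_def by (simp add: field_simps power2_eq_square)
lemma gbar_eq: "v \<noteq> 0 \<Longrightarrow> gbar h2 qv v = (v^2 + h2*qv) * inverse v"
  unfolding gbar_def by (simp add: field_simps power2_eq_square)
lemma gfun_sym: "v \<noteq> 0 \<Longrightarrow> gfun h2 (hv/v) = hv * inverse v + h2 * v * inverse hv"
  unfolding gfun_def using fa(5,6) by (simp add: field_simps)
lemma fbar_sym: "v \<noteq> 0 \<Longrightarrow> fbar h1 qv (hv/v) = fbar h1 qv v"
  unfolding fbar_def using fa(1,5) by (simp add: field_simps)
lemma fbar_nz: "v \<noteq> 0 \<Longrightarrow> v^2 + hv \<noteq> 0 \<Longrightarrow> fbar h1 qv v \<noteq> 0"
  using fbar_mul[of v] by auto
lemma fbar_diff: "v \<noteq> 0 \<Longrightarrow> w \<noteq> 0 \<Longrightarrow> fbar h1 qv v - fbar h1 qv w = (v - w) * (1 - hv/(v*w))"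
  unfolding fbar_def using fa(5) by (simp add: field_simps)

lemma I1a:
  assumes v: "v \<noteq> 0" "v^2 + hv \<noteq> 0"
  shows "v^4 * (poly pp1 (fbar h1 qv v) - gfun h2 v * poly qq1 (fbar h1 qv v)) = hv^3*(hv - h2)*UM (mm u) v"
proof -
  let ?x = "fbar h1 qv v"
  have e1: "v^5 * (P1F (mm u) hv h2 ?x - gfun h2 v * Q1F (mm u) hv ?x) = hv^3*(hv - h2)*(hv+v^2) * UM (mm u) v"
    by (rule F1a[OF hv_inv fbar_mul[OF v(1)] gfun_mul[OF v(1)]])
  have xm: "?x * v = v^2 + hv" by (rule fbar_mul[OF v(1)])
  have "(v^2 + hv) * (v^4 * (poly pp1 ?x - gfun h2 v * poly qq1 ?x)) = (v^2 + hv) * (hv^3*(hv - h2)*UM (mm u) v)"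
    using e1 xm unfolding R1 R3 by algebra
  then show ?thesis using v(2) by simp
qed

lemma I1b:
  assumes v: "v \<noteq> 0" "v^2 + hv \<noteq> 0"
  shows "v^5 * (poly pp0 (fbar h1 qv v) - gfun h2 v * poly qq0 (fbar h1 qv v)) = hv^2*(h2-hv)*(hv^2+h2*qv*v^2)*UM (mm u) v"
proof -
  let ?x = "fbar h1 qv v"
  have e1: "v^6 * (P0F (mm u) hv h2 qv ?x - gfun h2 v * Q0F (mm u) hv h2 qv ?x) = hv^2*(hv+v^2)*(h2-hv)*(hv^2+h2*qv*v^2) * UM (mm u) v"
    by (rule F1b[OF hv_inv fbar_mul[OF v(1)] gfun_mul[OF v(1)]])
  have xm: "?x * v = v^2 + hv" by (rule fbar_mul[OF v(1)])
  have "(v^2 + hv) * (v^5 * (poly pp0 ?x - gfun h2 v * poly qq0 ?x)) = (v^2 + hv) * (hv^2*(h2-hv)*(hv^2+h2*qv*v^2)*UM (mm u) v)"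
    using e1 xm unfolding R4 R2 by algebra
  then show ?thesis using v(2) by simp
qed

lemma I3:
  assumes v: "v \<noteq> 0" "v^2 + hv \<noteq> 0"
  shows "v^4 * (poly qq1 (fbar h1 qv v) * gbar h2 qv v + poly qq0 (fbar h1 qv v)) = hv^3*(h2*qv - hv)*UM (mm u) v"
proof -
  let ?x = "fbar h1 qv v"
  have e1: "v^5 * (Q1F (mm u) hv ?x * gbar h2 qv v + Q0F (mm u) hv h2 qv ?x) = hv^3*(h2*qv - hv)*(hv+v^2) * UM (mm u) v"
    by (rule F3[OF hv_inv _ fbar_eq[OF v(1)] gbar_eq[OF v(1)]]) (use v in simp)
  have xm: "?x * v = v^2 + hv" by (rule fbar_mul[OF v(1)])
  have "(v^2 + hv) * (v^4 * (poly qq1 ?x * gbar h2 qv v + poly qq0 ?x)) = (v^2 + hv) * (hv^3*(h2*qv - hv)*UM (mm u) v)"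
    using e1 xm unfolding R3 R2 by algebra
  then show ?thesis using v(2) by simp
qed

lemma I2:
  assumes v: "v \<noteq> 0" "v^2 + hv \<noteq> 0"
  shows "poly pp1 (fbar h1 qv v) * gbar h2 qv v + poly pp0 (fbar h1 qv v)
     = gfun h2 (hv/v) * (poly qq1 (fbar h1 qv v) * gbar h2 qv v + poly qq0 (fbar h1 qv v))"
proof -
  let ?x = "fbar h1 qv v"
  have "P1F (mm u) hv h2 ?x * gbar h2 qv v + P0F (mm u) hv h2 qv ?x - gfun h2 (hv/v) * (Q1F (mm u) hv ?x * gbar h2 qv v + Q0F (mm u) hv h2 qv ?x) = 0"
    by (rule F2[OF hv_inv _ fbar_eq[OF v(1)] gbar_eq[OF v(1)] gfun_sym[OF v(1)]]) (use v in simp)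
  then have "?x * (poly pp1 ?x * gbar h2 qv v + poly pp0 ?x - gfun h2 (hv/v) * (poly qq1 ?x * gbar h2 qv v + poly qq0 ?x)) = 0"
    unfolding R1 R2 R3 R4 by (simp add: algebra_simps)
  then show ?thesis using fbar_nz[OF v] by simp
qed

end

context
  fixes h1 h2 z :: complex and u :: "nat \<Rightarrow> complex"
  assumes gen: "GEN h1 h2 u z"
begin

abbreviation "qw \<equiv> qq h1 h2 u"
abbreviation "hw \<equiv> h1 / qq h1 h2 u"
abbreviation "pr1 \<equiv> p1P (mm u) (h1 / qq h1 h2 u) h2"
abbreviation "pr0 \<equiv> p0P (mm u) (h1 / qq h1 h2 u) h2 (qq h1 h2 u)"
abbreviation "qr1 \<equiv> q1P (mm u) (h1 / qq h1 h2 u)"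
abbreviation "qr0 \<equiv> q0P (mm u) (h1 / qq h1 h2 u) h2 (qq h1 h2 u)"

lemmas fa8 = GEN_facts[OF gen]

lemma ginv_ok:
  assumes dom: "ginv_dom h1 h2 u fb gb"
  shows "poly qr1 fb * gb + poly qr0 fb \<noteq> 0 \<and>
    ginv h1 h2 u fb gb = (poly pr1 fb * gb + poly pr0 fb) / (poly qr1 fb * gb + poly qr0 fb)"
proof -
  define pn where "pn = PnM (mm u) hw fb"
  define pd where "pd = PdM (mm u) hw fb"
  have pn0: "pn \<noteq> 0" and pd0: "pd \<noteq> 0" and ex: "\<exists>!g. relB h1 h2 u fb g gb"
    using dom unfolding ginv_dom_def pn_def pd_def Pn_PnM Pd_PdM by auto
  define K where "K = h1^4*h2^2/qw^3"
  have K0: "K \<noteq> 0" unfolding K_def using fa8(1,2,5) by simp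
  define R where "R = K * (pn / pd)"
  define N where "N = (\<lambda>g. (fb - gb)*(fb - g) - (h1/qw - h2*qw)*(h1/qw - h2)*(qw/h1))"
  define D where "D = (\<lambda>g. (fb*qw/h1 - gb/(h2*qw))*(fb*qw/h1 - g/h2) - (qw/h1 - 1/(h2*qw))*(qw/h1 - 1/h2)*(h1/qw))"
  define Qc where "Qc = fb * (poly qr1 fb * gb + poly qr0 fb)"
  define Pc where "Pc = fb * (poly pr1 fb * gb + poly pr0 fb)"
  have P: "\<And>g. relB h1 h2 u fb g gb \<longleftrightarrow> N g / D g = R"
    unfolding relB_def Let_def N_def D_def R_def K_def pn_def pd_def Pn_PnM Pd_PdM ..
  have R0: "R \<noteq> 0" unfolding R_def using K0 pn0 pd0 by simp
  have core': "pd * N g - K * pn * D g = g * Qc - Pc" for g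
  proof -
    have "pd * N g - K * pn * D g = g * (Q1F (mm u) hw fb * gb + Q0F (mm u) hw h2 qw fb)
       - (P1F (mm u) hw h2 fb * gb + P0F (mm u) hw h2 qw fb)"
      unfolding N_def D_def K_def Q1F_def Q0F_def P1F_def P0F_def pn_def pd_def
      by (rule core) (use fa8 in auto)
    then show ?thesis unfolding Qc_def Pc_def R1[OF gen] R2[OF gen] R3[OF gen] R4[OF gen]
      by (simp add: algebra_simps)
  qed
  have lin: "N g - R * D g = inverse pd * (g * Qc - Pc)" for g
  proof -
    have "N g - R * D g = inverse pd * (pd * N g - K * pn * D g)"
      unfolding R_def using pd0 by (simp add: field_simps)
    then show ?thesis unfolding core' .
  qed
  have Daff: "D g = ((fb*qw/h1 - gb/(h2*qw))*(fb*qw/h1) - (qw/h1 - 1/(h2*qw))*(qw/h1 - 1/h2)*(h1/qw))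
      + (- (fb*qw/h1 - gb/(h2*qw)) / h2) * g" for g
    unfolding D_def using fa8(1,2,5) by (simp add: field_simps)
  have "Qc \<noteq> 0 \<and> (THE g. relB h1 h2 u fb g gb) = Pc / Qc"
    by (rule unique_lin[OF P R0 lin _ Daff ex]) (use pd0 in simp)
  then show ?thesis unfolding ginv_def Qc_def Pc_def by auto
qed

end

lemma quad_zero:
  fixes c0 c1 c2 :: complex
  assumes "\<And>y. c0 + c1*y + c2*y^2 = 0"
  shows "c0 = 0" "c1 = 0" "c2 = 0"
proof -
  have a: "c0 = 0" using assms[of 0] by simp
  have b: "c1 + c2 = 0" using assms[of 1] a by simp
  have c: "- c1 + c2 = 0" using assms[of "-1"] a by simp
  show "c0 = 0" by (rule a)
  have "2 * c2 = (c1 + c2) + (- c1 + c2)" by simp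
  then show "c2 = 0" using b c by simp
  then show "c1 = 0" using b by simp
qed

lemma coeff3_eq: "degree (p::complex poly) \<le> 3 \<Longrightarrow> [:coeff p 0, coeff p 1, coeff p 2, coeff p 3:] = p"
  by (rule poly_eqI) (auto simp: coeff_pCons coeff_eq_0 numeral_2_eq_2 numeral_3_eq_3 split: nat.split)

context
  fixes h1 h2 z :: complex and u :: "nat \<Rightarrow> complex" and a :: "nat \<Rightarrow> nat \<Rightarrow> complex"
  assumes gen: "GEN h1 h2 u z"
    and anz: "nonzero32 a"
    and ahyp: "\<forall>v \<in> u ` {1..8} \<union> {z / qq h1 h2 u, h1 / (qq h1 h2 u * z)}.
             bieval a (fbar h1 (qq h1 h2 u) v) (gfun h2 v) = 0"
begin

abbreviation "q9 \<equiv> qq h1 h2 u"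
abbreviation "h9 \<equiv> h1 / qq h1 h2 u"
abbreviation "p91 \<equiv> p1P (mm u) (h1 / qq h1 h2 u) h2"
abbreviation "p90 \<equiv> p0P (mm u) (h1 / qq h1 h2 u) h2 (qq h1 h2 u)"
abbreviation "q91 \<equiv> q1P (mm u) (h1 / qq h1 h2 u)"
abbreviation "q90 \<equiv> q0P (mm u) (h1 / qq h1 h2 u) h2 (qq h1 h2 u)"
abbreviation "f9 k \<equiv> fbar h1 (qq h1 h2 u) (u k)"
abbreviation "N9 j \<equiv> NN a p91 p90 q91 q90 j"
abbreviation "Pi9 \<equiv> (\<Prod>k\<in>{1..8}. [:- f9 k, 1:])"
abbreviation "B9 j \<equiv> N9 j div Pi9"

lemmas fa9 = GEN_facts[OF gen]

lemma N9_vanish: "k \<in> {1..8} \<Longrightarrow> poly (N9 j) (f9 k) = 0"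
proof -
  assume k: "k \<in> {1..8}"
  let ?v = "u k" let ?x = "f9 k" let ?g = "gfun h2 (u k)"
  have v0: "?v \<noteq> 0" using fa9(4) k by auto
  have v2: "?v^2 + h9 \<noteq> 0" using fa9(9) k by auto
  have U0: "UM (mm u) ?v = 0" unfolding UM_U by (rule prod_zero) (use k in auto)
  have "?v^4 * (poly p91 ?x - ?g * poly q91 ?x) = 0" using I1a[OF gen v0 v2] U0 by simp
  then have e1: "poly p91 ?x = ?g * poly q91 ?x" using v0 by simp
  have "?v^5 * (poly p90 ?x - ?g * poly q90 ?x) = 0" using I1b[OF gen v0 v2] U0 by simp
  then have e0: "poly p90 ?x = ?g * poly q90 ?x" using v0 by simp
  have "u k \<in> u ` {1..8}" using k by blast
  then have av: "bieval a ?x ?g = 0" using ahyp by blast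
  have "poly (N9 0) ?x + poly (N9 1) ?x * y + poly (N9 2) ?x * y^2 = 0" for y
  proof -
    have "poly (N9 0) ?x + poly (N9 1) ?x * y + poly (N9 2) ?x * y^2
       = bihom a ?x (poly p91 ?x * y + poly p90 ?x) (poly q91 ?x * y + poly q90 ?x)"
      by (rule bihom_NN[symmetric])
    also have "\<dots> = bihom a ?x (?g * (poly q91 ?x * y + poly q90 ?x)) (poly q91 ?x * y + poly q90 ?x)"
      unfolding e1 e0 by (simp add: algebra_simps)
    also have "\<dots> = 0" unfolding bihom_scale av by simp
    finally show ?thesis .
  qed
  then have z: "poly (N9 0) ?x = 0" "poly (N9 1) ?x = 0" "poly (N9 2) ?x = 0"
    using quad_zero by blast+
  show ?thesis
  proof (cases "j = 0 \<or> j = 1")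
    case True then show ?thesis using z by auto
  next
    case False
    then have "N9 j = N9 2" unfolding NN_def by simp
    then show ?thesis using z by simp
  qed
qed

lemma inj_f9: "inj_on f9 {1..8}"
proof (rule inj_onI)
  fix k l assume kl: "k \<in> {1..8}" "l \<in> {1..8}" "f9 k = f9 l"
  have "0 = f9 k - f9 l" using kl by simp
  also have "\<dots> = (u k - u l) * (1 - h9/(u k * u l))"
    by (rule fbar_diff[OF gen]) (use fa9(4) kl in auto)
  finally have "u k = u l \<or> h9/(u k * u l) = 1" by auto
  moreover have "h9/(u k * u l) \<noteq> 1"
  proof
    assume "h9/(u k * u l) = 1"
    then have "u k * u l = h9" using fa9(4) kl by (auto simp: field_simps)
    then show False using fa9(11) kl by auto
  qed
  ultimately have "u k = u l" by blast
  then show "k = l" using fa9(10) kl(1,2) by blast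
qed

lemma N9_eq: "N9 j = Pi9 * B9 j"
proof -
  have "Pi9 dvd N9 j" by (rule prod_lin_dvd) (use inj_f9 N9_vanish in auto)
  then show ?thesis by simp
qed

lemma N9_poly: "poly (N9 j) x = poly Pi9 x * poly (B9 j) x"
proof -
  have "poly (N9 j) x = poly (Pi9 * B9 j) x" by (subst N9_eq[of j]) (rule refl)
  then show ?thesis by simp
qed

lemma deg_B9: "degree (B9 j) \<le> 3"
proof (cases "B9 j = 0")
  case True then show ?thesis by simp
next
  case False
  have d: "degree (N9 j) \<le> 11" by (rule deg_NN) (rule deg_p1P deg_p0P deg_q1P deg_q0P)+
  have "degree (Pi9 * B9 j) \<le> 11" using d by (simp only: N9_eq[of j, symmetric])
  moreover have "degree (Pi9 * B9 j) = degree Pi9 + degree (B9 j)"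
    by (rule degree_mult_eq[OF prod_lin_nz False])
  moreover have "degree Pi9 = 8" by (subst deg_prod_lin) auto
  ultimately show ?thesis by simp
qed

definition "bb9 = (\<lambda>i j. coeff (B9 j) i)"

lemma Ap_bb9: "Ap bb9 j = B9 j"
  unfolding Ap_def bb9_def by (rule coeff3_eq[OF deg_B9])

lemma main_id: "bihom a fb (poly p91 fb * gb + poly p90 fb) (poly q91 fb * gb + poly q90 fb)
   = (\<Prod>i\<in>{1..8}. fb - f9 i) * bieval bb9 fb gb"
proof -
  have pi: "poly Pi9 fb = (\<Prod>i\<in>{1..8}. fb - f9 i)" by (simp add: poly_prod)
  show ?thesis unfolding bihom_NN bieval_exp Ap_bb9 N9_poly pi by (simp add: algebra_simps)
qed


lemma prod_fdiff: "v \<noteq> 0 \<Longrightarrow> (\<Prod>k\<in>{1..8}. fbar h1 q9 v - f9 k) = UM (mm u) v * (\<Prod>k\<in>{1..8}. (1 - h9/(v * u k)))"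
proof -
  assume v0: "v \<noteq> 0"
  have "(\<Prod>k\<in>{1..8}. fbar h1 q9 v - f9 k) = (\<Prod>k\<in>{1..8}. (v - u k) * (1 - h9/(v * u k)))"
    by (rule prod.cong[OF refl], rule fbar_diff[OF gen v0]) (use fa9(4) in auto)
  also have "\<dots> = UM (mm u) v * (\<Prod>k\<in>{1..8}. (1 - h9/(v * u k)))" unfolding UM_U prod.distrib ..
  finally show ?thesis .
qed

lemma key_id:
  assumes v0: "v \<noteq> 0" and v2: "v^2 + h9 \<noteq> 0"
  shows "v^8 * (\<Prod>k\<in>{1..8}. fbar h1 q9 v - f9 k) * bieval bb9 (fbar h1 q9 v) (gbar h2 q9 v)
     = (h9^3*(h2*q9 - h9))^2 * (UM (mm u) v)^2 * bieval a (fbar h1 q9 v) (gfun h2 (h9/v))"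
proof -
  let ?x = "fbar h1 q9 v" let ?gb = "gbar h2 q9 v" let ?g = "gfun h2 (h9/v)"
  let ?Q = "poly q91 ?x * ?gb + poly q90 ?x"
  have P: "poly p91 ?x * ?gb + poly p90 ?x = ?g * ?Q" by (rule I2[OF gen v0 v2])
  have "(\<Prod>k\<in>{1..8}. ?x - f9 k) * bieval bb9 ?x ?gb = bihom a ?x (poly p91 ?x * ?gb + poly p90 ?x) ?Q"
    by (rule main_id[symmetric])
  also have "\<dots> = ?Q^2 * bieval a ?x ?g" unfolding P bihom_scale ..
  finally have e: "(\<Prod>k\<in>{1..8}. ?x - f9 k) * bieval bb9 ?x ?gb = ?Q^2 * bieval a ?x ?g" .
  have q: "v^4 * ?Q = h9^3*(h2*q9 - h9) * UM (mm u) v" by (rule I3[OF gen v0 v2])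
  have "v^8 * (\<Prod>k\<in>{1..8}. ?x - f9 k) * bieval bb9 ?x ?gb = (v^4 * ?Q)^2 * bieval a ?x ?g"
    using e by (simp add: power_mult_distrib power_mult[symmetric] mult.assoc)
  also have "\<dots> = (h9^3*(h2*q9 - h9))^2 * (UM (mm u) v)^2 * bieval a ?x ?g" unfolding q by (simp add: power_mult_distrib)
  finally show ?thesis .
qed

lemma bz:
  assumes v0: "v \<noteq> 0" and v2: "v^2 + h9 \<noteq> 0" and nk: "\<forall>k\<in>{1..8}. v \<noteq> u k \<and> v * u k \<noteq> h9"
    and aw: "bieval a (fbar h1 q9 (h9/v)) (gfun h2 (h9/v)) = 0"
  shows "bieval bb9 (fbar h1 q9 v) (gbar h2 q9 v) = 0"
proof -
  let ?x = "fbar h1 q9 v" let ?gb = "gbar h2 q9 v" let ?g = "gfun h2 (h9/v)"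
  let ?Q = "poly q91 ?x * ?gb + poly q90 ?x"
  have P: "poly p91 ?x * ?gb + poly p90 ?x = ?g * ?Q" by (rule I2[OF gen v0 v2])
  have "(\<Prod>k\<in>{1..8}. ?x - f9 k) * bieval bb9 ?x ?gb = bihom a ?x (poly p91 ?x * ?gb + poly p90 ?x) ?Q"
    by (rule main_id[symmetric])
  also have "\<dots> = ?Q^2 * bieval a ?x ?g" unfolding P bihom_scale ..
  also have "\<dots> = 0" using aw fbar_sym[OF gen v0] by simp
  finally have e: "(\<Prod>k\<in>{1..8}. ?x - f9 k) * bieval bb9 ?x ?gb = 0" .
  have "(\<Prod>k\<in>{1..8}. ?x - f9 k) \<noteq> 0"
  proof -
    have "?x - f9 k \<noteq> 0" if k: "k \<in> {1..8}" for k
    proof -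
      have uk: "u k \<noteq> 0" using fa9(4) k by auto
      have "?x - f9 k = (v - u k) * (1 - h9/(v * u k))" by (rule fbar_diff[OF gen v0 uk])
      moreover have "v - u k \<noteq> 0" using nk k by auto
      moreover have "1 - h9/(v * u k) \<noteq> 0"
      proof
        assume "1 - h9/(v * u k) = 0"
        then have "v * u k = h9" using v0 uk by (auto simp: field_simps)
        then show False using nk k by auto
      qed
      ultimately show ?thesis by simp
    qed
    then show ?thesis by (simp add: prod_zero_iff)
  qed
  then show ?thesis using e by simp
qed

lemma b_z: "bieval bb9 (fbar h1 q9 z) (gbar h2 q9 z) = 0"
proof (rule bz)
  show "z \<noteq> 0" "z^2 + h9 \<noteq> 0" using fa9(3,13) by auto
  show "\<forall>k\<in>{1..8}. z \<noteq> u k \<and> z * u k \<noteq> h9" using fa9(12) by auto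
  have "h9 / z = h1 / (q9 * z)" by simp
  then show "bieval a (fbar h1 q9 (h9 / z)) (gfun h2 (h9 / z)) = 0" using ahyp by simp
qed

lemma b_h1z: "bieval bb9 (fbar h1 q9 (h1/z)) (gbar h2 q9 (h1/z)) = 0"
proof (rule bz)
  show "h1/z \<noteq> 0" "(h1/z)^2 + h9 \<noteq> 0" using fa9(1,3,14) by auto
  show "\<forall>k\<in>{1..8}. h1/z \<noteq> u k \<and> (h1/z) * u k \<noteq> h9" using fa9(12) by auto
  have "h9 / (h1/z) = z / q9" using fa9(1) by simp
  then show "bieval a (fbar h1 q9 (h9 / (h1/z))) (gfun h2 (h9 / (h1/z))) = 0" using ahyp by simp
qed


lemma b_u:
  assumes i: "i \<in> {1..8}"
  shows "bieval bb9 (fbar h1 q9 (u i)) (gbar h2 q9 (u i)) = 0"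
proof -
  define c where "c = h9^3*(h2*q9 - h9)"
  define T where "T = (\<lambda>v. \<Prod>k\<in>{1..8}. (1 - h9/(v * u k)))"
  define U where "U = (\<lambda>v. \<Prod>k\<in>{1..8}. (v - u k))"
  define \<psi> where "\<psi> = (\<lambda>v. v^8 * T v * bieval bb9 (fbar h1 q9 v) (gbar h2 q9 v)
      - c^2 * U v * bieval a (fbar h1 q9 v) (gfun h2 (h9/v)))"
  have ui: "u i \<noteq> 0" using fa9(4) i by auto
  have uk: "\<forall>k\<in>{1..8}. u k \<noteq> 0" using fa9(4) by auto
  have rel: "U v * \<psi> v = 0" if v0: "v \<noteq> 0" and v2: "v^2 + h9 \<noteq> 0" for v
  proof -
    have UU: "UM (mm u) v = U v" unfolding UM_U U_def ..
    have "v^8 * (U v * T v) * bieval bb9 (fbar h1 q9 v) (gbar h2 q9 v)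
      = c^2 * (U v)^2 * bieval a (fbar h1 q9 v) (gfun h2 (h9/v))"
      using key_id[OF v0 v2] unfolding prod_fdiff[OF v0] T_def c_def UU .
    then show ?thesis unfolding \<psi>_def by (simp add: algebra_simps power2_eq_square)
  qed
  have ev: "eventually (\<lambda>v. v \<noteq> 0 \<and> v^2 + h9 \<noteq> 0 \<and> (\<forall>k\<in>{1..8}. v \<noteq> u k)) (at (u i))"
  proof -
    have e1: "eventually (\<lambda>v. v \<noteq> 0) (at (u i))"
      by (rule tendsto_imp_eventually_ne[OF tendsto_ident_at ui])
    have "((\<lambda>v. v^2 + h9) \<longlongrightarrow> (u i)^2 + h9) (at (u i))" by (intro tendsto_intros)
    then have e2: "eventually (\<lambda>v. v^2 + h9 \<noteq> 0) (at (u i))"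
      by (rule tendsto_imp_eventually_ne) (use fa9(9) i in auto)
    have e3: "eventually (\<lambda>v. \<forall>k\<in>{1..8}. v \<noteq> u k) (at (u i))"
      by (rule eventually_ball_finite) (auto intro: eventually_neq_at_within)
    show ?thesis by (intro eventually_conj e1 e2 e3)
  qed
  have "eventually (\<lambda>v. \<psi> v = 0) (at (u i))"
    using ev
  proof (rule eventually_mono)
    fix v assume v: "v \<noteq> 0 \<and> v^2 + h9 \<noteq> 0 \<and> (\<forall>k\<in>{1..8}. v \<noteq> u k)"
    then have "U v \<noteq> 0" unfolding U_def by (auto simp: prod_zero_iff)
    then show "\<psi> v = 0" using rel[of v] v by simp
  qed
  moreover have "isCont \<psi> (u i)"
    unfolding \<psi>_def T_def U_def bieval_def fbar_def gbar_def gfun_def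
    using ui uk fa9(5,6) by (auto intro!: continuous_intros)
  ultimately have "\<psi> (u i) = 0" using cont_zero by blast
  moreover have "U (u i) = 0" unfolding U_def by (rule prod_zero) (use i in auto)
  ultimately have "(u i)^8 * T (u i) * bieval bb9 (fbar h1 q9 (u i)) (gbar h2 q9 (u i)) = 0"
    unfolding \<psi>_def by simp
  moreover have "T (u i) \<noteq> 0"
  proof -
    have "1 - h9/(u i * u k) \<noteq> 0" if k: "k \<in> {1..8}" for k
    proof
      assume "1 - h9/(u i * u k) = 0"
      then have "u i * u k = h9" using ui uk k by (auto simp: field_simps)
      then show False using fa9(11) i k by auto
    qed
    then have nz: "\<forall>k\<in>{1..8}. 1 - h9/(u i * u k) \<noteq> 0" by blast
    show ?thesis unfolding T_def using nz by (metis (no_types, lifting) finite_atLeastAtMost prod_zero_iff)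
  qed
  ultimately show ?thesis using ui by simp
qed


lemma D_nz: "poly (p91 * q90 - p90 * q91) (fbar h1 q9 z) \<noteq> 0"
proof -
  let ?x = "fbar h1 q9 z" let ?gb = "gbar h2 q9 z" let ?w = "h9 / z" let ?g = "gfun h2 (h9/z)"
  have z0: "z \<noteq> 0" and z2: "z^2 + h9 \<noteq> 0" using fa9(3,13) by auto
  have P: "poly p91 ?x * ?gb + poly p90 ?x = ?g * (poly q91 ?x * ?gb + poly q90 ?x)" by (rule I2[OF gen z0 z2])
  have w0: "?w \<noteq> 0" using fa9(6) z0 by simp
  have w2: "?w^2 + h9 \<noteq> 0"
  proof -
    have "?w^2 + h9 = h9 * (z^2 + h9) / z^2" using z0 fa9(5) by (simp add: field_simps power2_eq_square)
    then show ?thesis using z0 z2 fa9(6) by simp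
  qed
  have xw: "fbar h1 q9 ?w = ?x" by (rule fbar_sym[OF gen z0])
  have Uw: "UM (mm u) ?w \<noteq> 0"
  proof -
    have "?w - u k \<noteq> 0" if k: "k \<in> {1..8}" for k
    proof
      assume "?w - u k = 0"
      then have "z * u k = h9" using z0 fa9(5) by (simp add: field_simps)
      then show False using fa9(12) k by auto
    qed
    then show ?thesis unfolding UM_U by (metis (no_types, lifting) finite_atLeastAtMost prod_zero_iff)
  qed
  have Uz: "UM (mm u) z \<noteq> 0"
  proof -
    have "z - u k \<noteq> 0" if k: "k \<in> {1..8}" for k using fa9(12) k by auto
    then show ?thesis unfolding UM_U by (metis (no_types, lifting) finite_atLeastAtMost prod_zero_iff)
  qed
  have "?w^4 * (poly p91 ?x - ?g * poly q91 ?x) = h9^3*(h9 - h2)*UM (mm u) ?w"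
    using I1a[OF gen w0 w2] unfolding xw .
  then have A: "poly p91 ?x - ?g * poly q91 ?x \<noteq> 0" using fa9(6,7) Uw by auto
  have "z^4 * (poly q91 ?x * ?gb + poly q90 ?x) = h9^3*(h2*q9 - h9)*UM (mm u) z" by (rule I3[OF gen z0 z2])
  then have B: "poly q91 ?x * ?gb + poly q90 ?x \<noteq> 0" using fa9(6,8) Uz by auto
  have "poly (p91 * q90 - p90 * q91) ?x = (poly p91 ?x - ?g * poly q91 ?x) * (poly q91 ?x * ?gb + poly q90 ?x)"
  proof -
    have p0: "poly p90 ?x = ?g * (poly q91 ?x * ?gb + poly q90 ?x) - poly p91 ?x * ?gb" using P by (simp add: algebra_simps)
    show ?thesis unfolding poly_diff poly_mult p0 by (simp add: algebra_simps)
  qed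
  then show ?thesis using A B by simp
qed

lemma nonzero_bb9: "nonzero32 bb9"
proof (rule ccontr)
  assume "\<not> nonzero32 bb9"
  then have b0: "\<forall>i\<le>3. \<forall>j\<le>2. bb9 i j = 0" unfolding nonzero32_def by auto
  have bz0: "bieval bb9 fb gb = 0" for fb gb unfolding bieval_def using b0 by simp
  define Dp where "Dp = p91 * q90 - p90 * q91"
  have Dp0: "Dp \<noteq> 0" using D_nz unfolding Dp_def by (metis poly_0)
  have col: "poly (Ap a j) fb = 0" if Dfb: "poly Dp fb \<noteq> 0" and j: "j \<le> 2" for fb j
  proof -
    let ?p1 = "poly p91 fb" let ?p0 = "poly p90 fb" let ?q1 = "poly q91 fb" let ?q0 = "poly q90 fb"
    have Dv: "?p1 * ?q0 - ?p0 * ?q1 \<noteq> 0" using Dfb unfolding Dp_def by simp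
    have bg: "bieval a fb g = 0" if g: "?p1 - g * ?q1 \<noteq> 0" for g
    proof -
      define gb where "gb = (g * ?q0 - ?p0) / (?p1 - g * ?q1)"
      have Q: "?q1 * gb + ?q0 = (?p1 * ?q0 - ?p0 * ?q1) / (?p1 - g * ?q1)"
        unfolding gb_def using g by (simp add: field_simps)
      have P: "?p1 * gb + ?p0 = g * (?q1 * gb + ?q0)"
        unfolding Q unfolding gb_def using g by (simp add: field_simps)
      have Qn: "?q1 * gb + ?q0 \<noteq> 0" unfolding Q using Dv g by simp
      have "(?q1 * gb + ?q0)^2 * bieval a fb g = bihom a fb (?p1 * gb + ?p0) (?q1 * gb + ?q0)"
        unfolding P bihom_scale ..
      also have "\<dots> = 0" unfolding main_id bz0 by simp
      finally show ?thesis using Qn by simp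
    qed
    let ?L = "[:?p1, - ?q1:]"
    have L0: "?L \<noteq> 0"
    proof
      assume "?L = 0"
      then have "?p1 = 0" "?q1 = 0" by auto
      then show False using Dv by simp
    qed
    have fin: "finite {g. poly ?L g = 0}" by (rule poly_roots_finite[OF L0])
    let ?C = "[:poly (Ap a 0) fb, poly (Ap a 1) fb, poly (Ap a 2) fb:]"
    have "UNIV - {g. poly ?L g = 0} \<subseteq> {g. poly ?C g = 0}"
    proof
      fix g assume "g \<in> UNIV - {g. poly ?L g = 0}"
      then have "?p1 - g * ?q1 \<noteq> 0" by (simp add: algebra_simps)
      then have "bieval a fb g = 0" by (rule bg)
      then show "g \<in> {g. poly ?C g = 0}" unfolding bieval_exp by (simp add: algebra_simps power2_eq_square)
    qed
    moreover have "infinite (UNIV - {g. poly ?L g = 0})"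
      by (rule Diff_infinite_finite[OF fin infinite_UNIV_char_0])
    ultimately have "infinite {g. poly ?C g = 0}" using infinite_super by blast
    then have "?C = 0" using poly_roots_finite by blast
    then have "poly (Ap a 0) fb = 0" "poly (Ap a 1) fb = 0" "poly (Ap a 2) fb = 0" by auto
    then show ?thesis using j by (auto simp: le_Suc_eq numeral_2_eq_2)
  qed
  have Apz: "Ap a j = 0" if j: "j \<le> 2" for j
  proof (rule ccontr)
    assume nz: "Ap a j \<noteq> 0"
    have finD: "finite {x. poly Dp x = 0}" by (rule poly_roots_finite[OF Dp0])
    have "UNIV - {x. poly Dp x = 0} \<subseteq> {x. poly (Ap a j) x = 0}" using col j by auto
    moreover have "infinite (UNIV - {x. poly Dp x = 0})"
      by (rule Diff_infinite_finite[OF finD infinite_UNIV_char_0])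
    ultimately have "infinite {x. poly (Ap a j) x = 0}" using infinite_super by blast
    then show False using poly_roots_finite[OF nz] by simp
  qed
  have "a i j = 0" if "i \<le> 3" "j \<le> 2" for i j
  proof -
    have "coeff (Ap a j) i = 0" using Apz[OF that(2)] by simp
    then show ?thesis using that(1) unfolding Ap_def
      by (auto simp: le_Suc_eq numeral_3_eq_3 numeral_2_eq_2)
  qed
  then show False using anz unfolding nonzero32_def by auto
qed

end

definition pgen :: "(nat \<Rightarrow> complex) \<Rightarrow> complex" where
  "pgen x = x 0 * x 9 * x 10 * (\<Prod>i\<in>{1..8}. x i)
    * ((\<Prod>i\<in>{1..8}. x i) - x 0 * x 9 ^ 3)
    * ((\<Prod>i\<in>{1..8}. x i) ^ 2 - x 0 ^ 3 * x 9 ^ 5)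
    * (\<Prod>i\<in>{1..8}. (\<Prod>j\<in>{1..8}. x j) + x 0 * x 9 ^ 2 * x i ^ 2)
    * (\<Prod>i\<in>{1..8}. \<Prod>k\<in>{1..8} - {i}. x i - x k)
    * (\<Prod>i\<in>{1..8}. \<Prod>k\<in>{1..8}. (\<Prod>j\<in>{1..8}. x j) - x 0 * x 9 ^ 2 * x i * x k)
    * (\<Prod>k\<in>{1..8}. (x 10 - x k) * ((\<Prod>j\<in>{1..8}. x j) - x 0 * x 9 ^ 2 * x 10 * x k)
         * (x 0 - x 10 * x k) * (x 10 * (\<Prod>j\<in>{1..8}. x j) - x 0 ^ 2 * x 9 ^ 2 * x k))
    * ((\<Prod>j\<in>{1..8}. x j) + x 0 * x 9 ^ 2 * x 10 ^ 2)
    * (x 0 ^ 3 * x 9 ^ 2 + x 10 ^ 2 * (\<Prod>j\<in>{1..8}. x j))"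

lemma pgen_poly: "pgen \<in> polyfun"
proof -
  have "(\<lambda>x. pgen x) \<in> polyfun" unfolding pgen_def
    by (intro pf_mul pf_add pf_diff pf_pow pf_prod pf_var pf_const finite_atLeastAtMost finite_Diff)
  then show ?thesis by simp
qed

lemma set8: "{1..8::nat} = {1,2,3,4,5,6,7,8}" by auto
lemma set8': "{Suc 0..8} = {1,2,3,4,5,6,7,8::nat}" by auto

definition "x0 = (\<lambda>i::nat. if i = 0 then 1 else if i = 9 then 1 else if i = 10 then 9 else (of_nat i :: complex))"

lemma pgen_nz: "pgen x0 \<noteq> 0"
  unfolding pgen_def x0_def by (simp add: prod_zero_iff set8' insert_Diff_if)

lemma params_u: "i \<in> {1..8} \<Longrightarrow> params h1 h2 u z i = u i"
  unfolding params_def by auto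

lemma pgen_GEN:
  assumes "pgen (params h1 h2 u z) \<noteq> 0"
  shows "GEN h1 h2 u z"
proof -
  have pr: "(\<Prod>i\<in>{1..8}. params h1 h2 u z i) = (\<Prod>i\<in>{1..8}. u i)"
    by (rule prod.cong) (auto simp: params_u)
  have h: "params h1 h2 u z 0 = h1" "params h1 h2 u z 9 = h2" "params h1 h2 u z 10 = z"
    unfolding params_def by auto
  note e = pr h
  have "pgen (params h1 h2 u z) = h1 * h2 * z * (\<Prod>i\<in>{1..8}. u i)
    * ((\<Prod>i\<in>{1..8}. u i) - h1 * h2 ^ 3)
    * ((\<Prod>i\<in>{1..8}. u i) ^ 2 - h1 ^ 3 * h2 ^ 5)
    * (\<Prod>i\<in>{1..8}. (\<Prod>j\<in>{1..8}. u j) + h1 * h2 ^ 2 * u i ^ 2)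
    * (\<Prod>i\<in>{1..8}. \<Prod>k\<in>{1..8} - {i}. u i - u k)
    * (\<Prod>i\<in>{1..8}. \<Prod>k\<in>{1..8}. (\<Prod>j\<in>{1..8}. u j) - h1 * h2 ^ 2 * u i * u k)
    * (\<Prod>k\<in>{1..8}. (z - u k) * ((\<Prod>j\<in>{1..8}. u j) - h1 * h2 ^ 2 * z * u k)
         * (h1 - z * u k) * (z * (\<Prod>j\<in>{1..8}. u j) - h1 ^ 2 * h2 ^ 2 * u k))
    * ((\<Prod>j\<in>{1..8}. u j) + h1 * h2 ^ 2 * z ^ 2)
    * (h1 ^ 3 * h2 ^ 2 + z ^ 2 * (\<Prod>j\<in>{1..8}. u j))"
    unfolding pgen_def e
    by (intro arg_cong2[where f="(*)"] refl prod.cong) (auto simp: params_u)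
  then show ?thesis using assms unfolding GEN_def Let_def
    by (auto simp: prod_zero_iff)
qed

theorem lemma4:
  "\<exists>p\<in>polyfun. (\<exists>x. p x \<noteq> 0) \<and>
    (\<forall>h1 h2 z (u :: nat \<Rightarrow> complex). p (params h1 h2 u z) \<noteq> 0 \<longrightarrow>
      (\<forall>a. nonzero32 a \<and>
          (\<forall>v \<in> u ` {1..8} \<union> {z / qq h1 h2 u, h1 / (qq h1 h2 u * z)}.
             bieval a (fbar h1 (qq h1 h2 u) v) (gfun h2 v) = 0) \<longrightarrow>
        (\<exists>b p1 p0 q1 q0 :: complex poly.
           (\<forall>fb gb. ginv_dom h1 h2 u fb gb \<longrightarrow>
               poly q1 fb * gb + poly q0 fb \<noteq> 0 \<and>
               ginv h1 h2 u fb gb = (poly p1 fb * gb + poly p0 fb) / (poly q1 fb * gb + poly q0 fb)) \<and>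
           nonzero32 b \<and>
           (\<forall>fb gb. bihom a fb (poly p1 fb * gb + poly p0 fb) (poly q1 fb * gb + poly q0 fb)
                    = (\<Prod>i\<in>{1..8}. fb - fbar h1 (qq h1 h2 u) (u i)) * bieval b fb gb) \<and>
           (\<forall>v \<in> u ` {1..8} \<union> {z, h1 / z}.
              bieval b (fbar h1 (qq h1 h2 u) v) (gbar h2 (qq h1 h2 u) v) = 0))))"
proof (intro bexI[of _ pgen] conjI allI impI)
  show "pgen \<in> polyfun" by (rule pgen_poly)
  show "\<exists>x. pgen x \<noteq> 0" using pgen_nz by blast
  fix h1 h2 z and u :: "nat \<Rightarrow> complex" and a :: "nat \<Rightarrow> nat \<Rightarrow> complex"
  assume "pgen (params h1 h2 u z) \<noteq> 0"
  then have gen: "GEN h1 h2 u z" by (rule pgen_GEN)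
  assume A: "nonzero32 a \<and> (\<forall>v \<in> u ` {1..8} \<union> {z / qq h1 h2 u, h1 / (qq h1 h2 u * z)}.
             bieval a (fbar h1 (qq h1 h2 u) v) (gfun h2 v) = 0)"
  then have anz: "nonzero32 a" and ahyp: "\<forall>v \<in> u ` {1..8} \<union> {z / qq h1 h2 u, h1 / (qq h1 h2 u * z)}.
             bieval a (fbar h1 (qq h1 h2 u) v) (gfun h2 v) = 0" by auto
  let ?p1 = "p1P (mm u) (h1 / qq h1 h2 u) h2"
  let ?p0 = "p0P (mm u) (h1 / qq h1 h2 u) h2 (qq h1 h2 u)"
  let ?q1 = "q1P (mm u) (h1 / qq h1 h2 u)"
  let ?q0 = "q0P (mm u) (h1 / qq h1 h2 u) h2 (qq h1 h2 u)"
  show "\<exists>b p1 p0 q1 q0 :: complex poly.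
           (\<forall>fb gb. ginv_dom h1 h2 u fb gb \<longrightarrow>
               poly q1 fb * gb + poly q0 fb \<noteq> 0 \<and>
               ginv h1 h2 u fb gb = (poly p1 fb * gb + poly p0 fb) / (poly q1 fb * gb + poly q0 fb)) \<and>
           nonzero32 b \<and>
           (\<forall>fb gb. bihom a fb (poly p1 fb * gb + poly p0 fb) (poly q1 fb * gb + poly q0 fb)
                    = (\<Prod>i\<in>{1..8}. fb - fbar h1 (qq h1 h2 u) (u i)) * bieval b fb gb) \<and>
           (\<forall>v \<in> u ` {1..8} \<union> {z, h1 / z}.
              bieval b (fbar h1 (qq h1 h2 u) v) (gbar h2 (qq h1 h2 u) v) = 0)"
  proof (intro exI conjI allI impI ballI)
    fix fb gb assume "ginv_dom h1 h2 u fb gb"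
    note g = ginv_ok[OF gen this]
    show "poly ?q1 fb * gb + poly ?q0 fb \<noteq> 0" using g by blast
    show "ginv h1 h2 u fb gb = (poly ?p1 fb * gb + poly ?p0 fb) / (poly ?q1 fb * gb + poly ?q0 fb)" using g by blast
  next
    show "nonzero32 (bb9 h1 h2 u a)" by (rule nonzero_bb9[OF gen anz ahyp])
  next
    fix fb gb
    show "bihom a fb (poly ?p1 fb * gb + poly ?p0 fb) (poly ?q1 fb * gb + poly ?q0 fb)
        = (\<Prod>i\<in>{1..8}. fb - fbar h1 (qq h1 h2 u) (u i)) * bieval (bb9 h1 h2 u a) fb gb"
      by (rule main_id[OF gen anz ahyp])
  next
    fix v assume "v \<in> u ` {1..8} \<union> {z, h1 / z}"
    then show "bieval (bb9 h1 h2 u a) (fbar h1 (qq h1 h2 u) v) (gbar h2 (qq h1 h2 u) v) = 0"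
      using b_u[OF gen anz ahyp] b_z[OF gen anz ahyp] b_h1z[OF gen anz ahyp] by auto
  qed
qed

end
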